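(* Let $k\ge 1$ and $m_1,d_1,\dots,d_k$ be positive integers, let $\mathbf d=(m_1,d_1,\dots,d_k,1)$ and $\gamma>0$. For each pair of positive integers $(a,b)$ let $\|\cdot\|_*$ be a norm on $\mathbb{R}^{a\times b}$. Let $\mathcal{N}^{k,\mathbf d}_{\gamma_*\le\gamma}$ be the class of all functions $f:\mathbb{R}^{m_1}\to\mathbb{R}$ of the form $f=T_{k+1}\circ\sigma\circ T_k\circ\cdots\circ\sigma\circ T_1$, where $T_i:\mathbb{R}^{d_{i-1}}\to\mathbb{R}^{d_i}$ (with $d_0=m_1$, $d_{k+1}=1$) is given by $T_i(u)=\tilde V_i^T(1,u^T)^T$ for some $\tilde V_i\in\mathbb{R}^{(d_{i-1}+1)\times d_i}$, and $\gamma_*:=\prod_{i=1}^{k+1}\|\tilde V_i\|_*\le\gamma$. Then for every $n\ge1$ and every sample $S=\{x_1,\dots,x_n\}\subseteq\mathbb{R}^{m_1}$, $$\widehat{\mathfrak{R}}_S\big(\mathcal{N}^{k,\mathbf d}_{\gamma_*\le\gamma}\big)=\infty.$$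
   Context: $\sigma(u)=\max(u,0)$ for $u\in\mathbb{R}$, applied coordinatewise to vectors. For a class $\mathcal F$ of real-valued functions and a sample $S=\{x_1,\dots,x_n\}$, the empirical Rademacher complexity is $\widehat{\mathfrak{R}}_S(\mathcal F)=\mathbb{E}_\epsilon\big[\sup_{f\in\mathcal F}\frac1n\sum_{i=1}^n\epsilon_i f(x_i)\big]$, where $\epsilon_1,\dots,\epsilon_n$ are i.i.d. uniform on $\{-1,+1\}$. *)

theory Defs
  imports "HOL-Analysis.Analysis"
begin

text \<open>Vectors in R^a are functions nat => real vanishing outside {..<a};
  matrices in R^(a x b) are functions nat => nat => real vanishing outside {..<a} x {..<b}.\<close>

definition vecs :: "nat \<Rightarrow> (nat \<Rightarrow> real) set" where
  "vecs a = {u. \<forall>l. a \<le> l \<longrightarrow> u l = 0}"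

definition mats :: "nat \<Rightarrow> nat \<Rightarrow> (nat \<Rightarrow> nat \<Rightarrow> real) set" where
  "mats a b = {M. \<forall>i j. (a \<le> i \<or> b \<le> j) \<longrightarrow> M i j = 0}"

definition matrix_norm :: "nat \<Rightarrow> nat \<Rightarrow> ((nat \<Rightarrow> nat \<Rightarrow> real) \<Rightarrow> real) \<Rightarrow> bool" where
  "matrix_norm a b nm \<longleftrightarrow>
     (\<forall>A\<in>mats a b. 0 \<le> nm A \<and> (nm A = 0 \<longleftrightarrow> A = (\<lambda>i j. 0))) \<and>
     (\<forall>A\<in>mats a b. \<forall>B\<in>mats a b. nm (\<lambda>i j. A i j + B i j) \<le> nm A + nm B) \<and>
     (\<forall>A\<in>mats a b. \<forall>c::real. nm (\<lambda>i j. c * A i j) = \<bar>c\<bar> * nm A)"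

definition relu :: "real \<Rightarrow> real" where
  "relu u = max u 0"

text \<open>T(u) = V^T (1, u^T)^T for V in R^((a+1) x b): row 0 of V is the bias row.\<close>
definition affine :: "nat \<Rightarrow> nat \<Rightarrow> (nat \<Rightarrow> nat \<Rightarrow> real) \<Rightarrow> (nat \<Rightarrow> real) \<Rightarrow> (nat \<Rightarrow> real)" where
  "affine a b V u = (\<lambda>j. if j < b then V 0 j + (\<Sum>l<a. V (Suc l) j * u l) else 0)"

fun net_out :: "(nat \<Rightarrow> nat) \<Rightarrow> (nat \<Rightarrow> nat \<Rightarrow> nat \<Rightarrow> real) \<Rightarrow> nat \<Rightarrow> (nat \<Rightarrow> real) \<Rightarrow> (nat \<Rightarrow> real)" where
  "net_out d V 0 x = x"
| "net_out d V (Suc i) x =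
     affine (d i) (d (Suc i)) (V (Suc i))
       (if i = 0 then x else (\<lambda>l. relu (net_out d V i x l)))"

text \<open>The class N^{k,d}_{gamma_* <= gamma}; d 0 = m_1, d (k+1) = 1, Nm a b is the norm on R^(a x b).\<close>
definition NN_class :: "nat \<Rightarrow> (nat \<Rightarrow> nat) \<Rightarrow> (nat \<Rightarrow> nat \<Rightarrow> (nat \<Rightarrow> nat \<Rightarrow> real) \<Rightarrow> real)
    \<Rightarrow> real \<Rightarrow> ((nat \<Rightarrow> real) \<Rightarrow> real) set" where
  "NN_class k d Nm \<gamma> =
     {(\<lambda>x. net_out d V (Suc k) x 0) | V.
        (\<forall>i\<in>{1..Suc k}. V i \<in> mats (d (i - 1) + 1) (d i)) \<and>
        (\<Prod>i=1..Suc k. Nm (d (i - 1) + 1) (d i) (V i)) \<le> \<gamma>}"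

text \<open>Empirical Rademacher complexity: expectation over the uniform distribution on
  sign vectors in {-1,1}^n, written as the average over all 2^n sign vectors
  (values in the extended reals, as the supremum may be infinite).\<close>
definition rademacher :: "((nat \<Rightarrow> real) \<Rightarrow> real) set \<Rightarrow> nat \<Rightarrow> (nat \<Rightarrow> (nat \<Rightarrow> real)) \<Rightarrow> ereal" where
  "rademacher F n xs =
     (\<Sum>e\<in>({..<n} \<rightarrow>\<^sub>E {-1, 1::real}).
         (SUP f\<in>F. ereal ((1 / real n) * (\<Sum>i<n. e i * f (xs i))))) / ereal (2 ^ n)"

end

theory Submission
  imports Defs
begin

theorem claim1:
  fixes k :: nat and d :: "nat \<Rightarrow> nat"
    and Nm :: "nat \<Rightarrow> nat \<Rightarrow> (nat \<Rightarrow> nat \<Rightarrow> real) \<Rightarrow> real"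
    and \<gamma> :: real and n :: nat and xs :: "nat \<Rightarrow> (nat \<Rightarrow> real)"
  assumes "k \<ge> 1"
    and "\<forall>i\<le>k. d i > 0"
    and "d (Suc k) = 1"
    and "\<forall>a b. 0 < a \<longrightarrow> 0 < b \<longrightarrow> matrix_norm a b (Nm a b)"
    and "\<gamma> > 0"
    and "n \<ge> 1"
    and "\<forall>i<n. xs i \<in> vecs (d 0)"
  shows "rademacher (NN_class k d Nm \<gamma>) n xs = \<infinity>"
proof -
  define V where "V c = (\<lambda>i::nat. if i = Suc k then (\<lambda>(a::nat) (b::nat). if a = 0 \<and> b = 0 then c else 0)
                           else (\<lambda>(a::nat) (b::nat). 0::real))" for c :: real
  have d1: "d 1 > 0" using assms(1,2) by auto
  have N0: "Nm (d 0 + 1) (d 1) (\<lambda>a b. 0) = 0"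
    using assms(4) d1 unfolding matrix_norm_def mats_def by auto
  have const: "(\<lambda>x. c) \<in> NN_class k d Nm \<gamma>" for c
  proof -
    have out: "(\<lambda>x. net_out d (V c) (Suc k) x 0) = (\<lambda>x. c)"
    proof
      fix x
      have "V c (Suc k) = (\<lambda>(a::nat) (b::nat). if a = 0 \<and> b = 0 then c else 0)" by (simp add: V_def)
      then show "net_out d (V c) (Suc k) x 0 = c"
        unfolding net_out.simps(2) affine_def using assms(3) by simp
    qed
    have mem: "\<forall>i\<in>{1..Suc k}. V c i \<in> mats (d (i - 1) + 1) (d i)"
      using assms(3) by (auto simp: V_def mats_def)
    have "(\<Prod>i=1..Suc k. Nm (d (i - 1) + 1) (d i) (V c i)) = 0"
      apply (rule prod_zero)
      using assms(1) N0 by (auto simp: V_def intro!: bexI[of _ 1])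
    then have P0: "(\<Prod>i=1..Suc k. Nm (d (i - 1) + 1) (d i) (V c i)) = 0" .
    have "(\<forall>i\<in>{1..Suc k}. V c i \<in> mats (d (i - 1) + 1) (d i)) \<and>
        (\<Prod>i=1..Suc k. Nm (d (i - 1) + 1) (d i) (V c i)) \<le> \<gamma>" using mem assms(5) P0 by (simp only:) linarith
    then show ?thesis unfolding NN_class_def out[symmetric] by blast
  qed
  define e1 where "e1 = restrict (\<lambda>_. 1::real) {..<n}"
  have e1E: "e1 \<in> {..<n} \<rightarrow>\<^sub>E {-1, 1::real}" by (auto simp: e1_def)
  have inf: "(SUP f\<in>NN_class k d Nm \<gamma>. ereal ((1 / real n) * (\<Sum>i<n. e1 i * f (xs i)))) = \<infinity>"
  proof (rule SUP_PInfty)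
    fix m :: nat
    have "(1 / real n) * (\<Sum>i<n. e1 i * real m) = real m"
      using assms(6) by (simp add: e1_def)
    then show "\<exists>f\<in>NN_class k d Nm \<gamma>. ereal (real m) \<le> ereal ((1 / real n) * (\<Sum>i<n. e1 i * f (xs i)))"
      using const[of "real m"] by (intro bexI[of _ "\<lambda>x. real m"]) auto
  qed
  have "(\<Sum>e\<in>({..<n} \<rightarrow>\<^sub>E {-1, 1::real}).
         (SUP f\<in>NN_class k d Nm \<gamma>. ereal ((1 / real n) * (\<Sum>i<n. e i * f (xs i))))) = \<infinity>"
    unfolding sum_Pinfty using e1E inf by (auto intro!: finite_PiE)
  then show ?thesis unfolding rademacher_def by simp
qed

end
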